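(* Let $A$ be a nonempty finite set of positive integers. The number of nonempty subsets of $A$ whose elements are pairwise co-prime equals \[ \# \left\{B\subseteq A:\ B\neq\emptyset\ \text{and}\ 2|B| -1 = \left( 1 + 4 \sum_{d=1}^{\sup B} \mu(d)\, v(B,d)\, (v(B,d)-1) \right)^{1/2} \right\}. \]
   Context: For a nonempty finite set $B$ of positive integers, $\sup B$ is its largest element and, for a positive integer $d$, $v(B,d)$ is the number of multiples of $d$ in $B$. $\mu$ is the Möbius function. A set is said to have pairwise co-prime elements if every $2$-element subset has gcd $1$ (vacuously true for singletons). *)

theory Defs
  imports Complex_Main "HOL-Computational_Algebra.Squarefree"
begin

definition moebius_mu :: "nat \<Rightarrow> int" where
  "moebius_mu d = (if squarefree d then (-1) ^ card (prime_factors d) else 0)"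

definition v :: "nat set \<Rightarrow> nat \<Rightarrow> nat" where
  "v B d = card {b \<in> B. d dvd b}"

definition pairwise_coprime :: "nat set \<Rightarrow> bool" where
  "pairwise_coprime B \<longleftrightarrow> (\<forall>a\<in>B. \<forall>b\<in>B. a \<noteq> b \<longrightarrow> coprime a b)"

end

theory Submission imports Defs begin
lemma alt_sum:
  assumes "finite P"
  shows "(\<Sum>S\<in>Pow P. (-1::int) ^ card S) = (if P = {} then 1 else 0)"
  using assms
proof (induction P rule: finite_induct)
  case empty then show ?case by simp
next
  case (insert x F)
  have fin: "finite (Pow F)" using insert by simp
  have disj: "Pow F \<inter> insert x ` Pow F = {}" using insert by auto
  have inj: "inj_on (insert x) (Pow F)" unfolding inj_on_def using insert.hyps(2) by (metis PowD insert_ident subsetD)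
  have "(\<Sum>S\<in>Pow (insert x F). (-1::int) ^ card S) =
        (\<Sum>S\<in>Pow F. (-1::int) ^ card S) + (\<Sum>S\<in>insert x ` Pow F. (-1::int) ^ card S)"
    unfolding Pow_insert by (rule sum.union_disjoint) (use fin disj in auto)
  also have "(\<Sum>S\<in>insert x ` Pow F. (-1::int) ^ card S) = (\<Sum>S\<in>Pow F. (-1::int) ^ card (insert x S))"
    by (rule sum.reindex[OF inj, unfolded comp_def])
  also have "\<dots> = (\<Sum>S\<in>Pow F. - ((-1::int) ^ card S))"
  proof (rule sum.cong[OF refl])
    fix S assume "S \<in> Pow F"
    then have "finite S" "x \<notin> S" using insert finite_subset by auto
    then show "(-1::int) ^ card (insert x S) = - ((-1) ^ card S)" by simp
  qed
  finally show ?case by (simp add: sum_negf)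
qed

lemma prod_primes_facts:
  assumes "S \<subseteq> prime_factors (n::nat)" "n > 0"
  shows "\<Prod>S dvd n" "squarefree (\<Prod>S)" "prime_factors (\<Prod>S) = S"
proof -
  have fin: "finite S" using assms finite_subset by blast
  have pr: "\<And>p. p \<in> S \<Longrightarrow> prime p" using assms by auto
  show "\<Prod>S dvd n"
  proof -
    have "\<Prod>S dvd (\<Prod>p\<in>prime_factors n. p ^ multiplicity p n)"
    proof -
      have "\<Prod>S dvd \<Prod>(prime_factors n)" by (rule prod_dvd_prod_subset) (use assms in auto)
      also have "\<dots> dvd (\<Prod>p\<in>prime_factors n. p ^ multiplicity p n)"
        by (rule prod_dvd_prod) (use assms in \<open>auto simp: prime_factors_multiplicity dvd_power\<close>)
      finally show ?thesis .
    qed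
    also have "\<dots> = n" using assms by (simp add: prod_prime_factors)
    finally show ?thesis .
  qed
  show "squarefree (\<Prod>S)"
    using squarefree_prod_coprime[of S "\<lambda>x. x"] pr
    by (metis fin primes_coprime squarefree_prime)
  have "prime_factors (\<Prod>S) = \<Union>((prime_factors \<circ> (\<lambda>x. x)) ` S)"
    by (rule prime_factors_prod) (use fin pr in \<open>auto dest: prime_gt_0_nat\<close>)
  also have "\<dots> = S" using pr by (auto simp: prime_prime_factors)
  finally show "prime_factors (\<Prod>S) = S" .
qed

lemma moebius_divsum:
  assumes "(n::nat) > 0"
  shows "(\<Sum>d | d dvd n. moebius_mu d) = (if n = 1 then 1 else 0)"
proof -
  let ?P = "prime_factors n"
  have finD: "finite {d. d dvd n}" using assms by simp
  have "(\<Sum>d | d dvd n. moebius_mu d) = (\<Sum>d | d dvd n \<and> squarefree d. moebius_mu d)"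
    by (rule sum.mono_neutral_right) (use finD in \<open>auto simp: moebius_mu_def\<close>)
  also have "\<dots> = (\<Sum>d | d dvd n \<and> squarefree d. (-1) ^ card (prime_factors d))"
    by (simp add: moebius_mu_def)
  also have "\<dots> = (\<Sum>S\<in>Pow ?P. (-1) ^ card (prime_factors (\<Prod>S)))"
  proof (rule sum.reindex_bij_betw[symmetric])
    show "bij_betw Prod (Pow ?P) {d. d dvd n \<and> squarefree d}"
    proof (rule bij_betw_byWitness[where f' = prime_factors])
      show "Prod ` Pow ?P \<subseteq> {d. d dvd n \<and> squarefree d}"
        using prod_primes_facts assms by auto
      show "prime_factors ` {d. d dvd n \<and> squarefree d} \<subseteq> Pow ?P"
        using assms by (auto simp: prime_factors_dvd intro: dvd_trans)
      show "\<forall>S\<in>Pow ?P. prime_factors (\<Prod>S) = S"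
        using prod_primes_facts assms by auto
      show "\<forall>d\<in>{d. d dvd n \<and> squarefree d}. \<Prod>(prime_factors d) = d"
      proof
        fix d assume that: "d \<in> {d. d dvd n \<and> squarefree d}"
        have d0: "d \<noteq> 0" using that assms by auto
        have sq: "squarefree d" using that by auto
        have "\<Prod>(prime_factors d) = (\<Prod>p\<in>prime_factors d. p ^ multiplicity p d)"
          using squarefree_factorial_semiring'[OF d0] sq by (intro prod.cong) auto
        also have "\<dots> = d" using d0 by (simp add: prod_prime_factors)
        finally show "\<Prod>(prime_factors d) = d" .
      qed
    qed
  qed
  also have "\<dots> = (\<Sum>S\<in>Pow ?P. (-1) ^ card S)"
    using prod_primes_facts assms by (intro sum.cong) auto
  also have "\<dots> = (if ?P = {} then 1 else 0)" by (rule alt_sum) simp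
  also have "(?P = {}) = (n = 1)" using assms
    by (auto simp: prime_factorization_empty_iff)
  finally show ?thesis .
qed
lemma card_offdiag:
  assumes "finite V"
  shows "card {(a,b). a \<in> V \<and> b \<in> V \<and> a \<noteq> b} = card V * (card V - 1)"
proof -
  have eq: "{(a,b). a \<in> V \<and> b \<in> V \<and> a \<noteq> b} = V \<times> V - (\<lambda>x. (x,x)) ` V" by auto
  have "card ((\<lambda>x. (x,x)) ` V) = card V" by (rule card_image) (auto simp: inj_on_def)
  moreover have "card (V \<times> V - (\<lambda>x. (x,x)) ` V) = card (V \<times> V) - card ((\<lambda>x. (x,x)) ` V)"
    by (rule card_Diff_subset) (use assms in auto)
  ultimately show ?thesis unfolding eq by (simp add: card_cartesian_product diff_mult_distrib2)
qed

lemma key_sum: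
  fixes B :: "nat set"
  assumes fin: "finite B" and ne: "B \<noteq> {}" and pos: "\<forall>b\<in>B. b > 0"
  defines "D \<equiv> {(a,b). a \<in> B \<and> b \<in> B \<and> a \<noteq> b}"
  shows "(\<Sum>d = 1..Max B. moebius_mu d * int (v B d) * (int (v B d) - 1))
         = int (card {p\<in>D. coprime (fst p) (snd p)})"
proof -
  let ?M = "Max B"
  have finD: "finite D" unfolding D_def
    by (rule finite_subset[of _ "B \<times> B"]) (use fin in auto)
  have vv: "int (v B d) * (int (v B d) - 1) = int (card {p\<in>D. d dvd fst p \<and> d dvd snd p})" for d
  proof -
    have "{p\<in>D. d dvd fst p \<and> d dvd snd p} = {(a,b). a \<in> {b\<in>B. d dvd b} \<and> b \<in> {b\<in>B. d dvd b} \<and> a \<noteq> b}"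
      unfolding D_def by auto
    then have "card {p\<in>D. d dvd fst p \<and> d dvd snd p} = v B d * (v B d - 1)"
      unfolding v_def using card_offdiag[of "{b\<in>B. d dvd b}"] fin by simp
    then show ?thesis by (cases "v B d") (auto simp: algebra_simps)
  qed
  have "(\<Sum>d = 1..?M. moebius_mu d * int (v B d) * (int (v B d) - 1))
     = (\<Sum>d = 1..?M. \<Sum>p\<in>D. if d dvd fst p \<and> d dvd snd p then moebius_mu d else 0)"
  proof (intro sum.cong refl)
    fix d
    have "(\<Sum>p\<in>D. if d dvd fst p \<and> d dvd snd p then moebius_mu d else 0)
        = (\<Sum>p\<in>{p\<in>D. d dvd fst p \<and> d dvd snd p}. moebius_mu d)"
      by (rule sum.inter_filter[symmetric]) (rule finD)
    also have "\<dots> = moebius_mu d * int (card {p\<in>D. d dvd fst p \<and> d dvd snd p})" by simp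
    finally show "moebius_mu d * int (v B d) * (int (v B d) - 1) =
      (\<Sum>p\<in>D. if d dvd fst p \<and> d dvd snd p then moebius_mu d else 0)"
      by (simp only: mult.assoc vv)
  qed
  also have "\<dots> = (\<Sum>p\<in>D. \<Sum>d = 1..?M. if d dvd fst p \<and> d dvd snd p then moebius_mu d else 0)"
    by (rule sum.swap)
  also have "\<dots> = (\<Sum>p\<in>D. if coprime (fst p) (snd p) then 1 else 0)"
  proof (rule sum.cong[OF refl])
    fix p assume p: "p \<in> D"
    then have a: "fst p \<in> B" "fst p > 0" using pos unfolding D_def by auto
    have "(\<Sum>d = 1..?M. if d dvd fst p \<and> d dvd snd p then moebius_mu d else 0)
        = (\<Sum>d \<in> {d\<in>{1..?M}. d dvd gcd (fst p) (snd p)}. moebius_mu d)"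
      by (subst sum.inter_filter) auto
    also have "{d\<in>{1..?M}. d dvd gcd (fst p) (snd p)} = {d. d dvd gcd (fst p) (snd p)}"
    proof -
      have "d \<in> {1..?M}" if "d dvd gcd (fst p) (snd p)" for d
      proof -
        have "d dvd fst p" using that by auto
        then have "d \<le> fst p" "d > 0" using a by (auto intro: dvd_imp_le dvd_pos_nat)
        moreover have "fst p \<le> ?M" using a fin by auto
        ultimately show ?thesis by auto
      qed
      then show ?thesis by auto
    qed
    also have "(\<Sum>d | d dvd gcd (fst p) (snd p). moebius_mu d) = (if gcd (fst p) (snd p) = 1 then 1 else 0)"
      by (rule moebius_divsum) (use a in auto)
    finally show "(\<Sum>d = 1..?M. if d dvd fst p \<and> d dvd snd p then moebius_mu d else 0)
        = (if coprime (fst p) (snd p) then 1 else 0)" by (simp add: coprime_iff_gcd_eq_1)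
  qed
  also have "\<dots> = int (card {p\<in>D. coprime (fst p) (snd p)})"
    by (subst sum.inter_filter[symmetric]) (use finD in auto)
  finally show ?thesis .
qed
lemma cond_iff:
  fixes B :: "nat set"
  assumes fin: "finite B" and ne: "B \<noteq> {}" and pos: "\<forall>b\<in>B. b > 0"
  shows "(2 * real (card B) - 1 =
             sqrt (1 + 4 * real_of_int (\<Sum>d = 1..Max B. moebius_mu d * int (v B d) * (int (v B d) - 1))))
         \<longleftrightarrow> pairwise_coprime B"
proof -
  define D where "D = {(a,b). a \<in> B \<and> b \<in> B \<and> a \<noteq> b}"
  define C where "C = {p\<in>D. coprime (fst p) (snd p)}"
  let ?n = "card B"
  have n1: "?n \<ge> 1" using fin ne by (simp add: Suc_le_eq card_gt_0_iff)
  have finD: "finite D" unfolding D_def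
    by (rule finite_subset[of _ "B \<times> B"]) (use fin in auto)
  have cD: "card D = ?n * (?n - 1)" unfolding D_def by (rule card_offdiag[OF fin])
  have ks: "(\<Sum>d = 1..Max B. moebius_mu d * int (v B d) * (int (v B d) - 1)) = int (card C)"
    unfolding C_def D_def by (rule key_sum[OF fin ne pos])
  have pos2: "2 * real ?n - 1 \<ge> 0" using n1 by simp
  have "(2 * real ?n - 1 = sqrt (1 + 4 * real (card C))) \<longleftrightarrow> (2 * real ?n - 1)^2 = 1 + 4 * real (card C)"
    using pos2 by (metis abs_of_nonneg add_nonneg_nonneg of_nat_0_le_iff real_sqrt_abs real_sqrt_pow2
        mult_nonneg_nonneg zero_le_numeral zero_le_one)
  also have "\<dots> \<longleftrightarrow> real (card C) = real ?n * (real ?n - 1)"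
    by (simp add: power2_eq_square algebra_simps) linarith
  also have "\<dots> \<longleftrightarrow> card C = card D"
  proof -
    have "real (card D) = real ?n * (real ?n - 1)" using cD n1 by (simp add: of_nat_diff)
    then show ?thesis by linarith
  qed
  also have "\<dots> \<longleftrightarrow> C = D"
    using finD by (metis (no_types, lifting) C_def card_subset_eq mem_Collect_eq subsetI)
  also have "\<dots> \<longleftrightarrow> pairwise_coprime B"
  proof
    assume "C = D"
    then show "pairwise_coprime B" unfolding C_def D_def pairwise_coprime_def
      by (metis (mono_tags, lifting) case_prodI fst_conv mem_Collect_eq snd_conv)
  next
    assume "pairwise_coprime B"
    then show "C = D" unfolding C_def D_def pairwise_coprime_def by auto
  qed
  finally show ?thesis using ks by simp
qed

theorem corollary5p6:
  fixes A :: "nat set"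
  assumes "finite A" and "A \<noteq> {}" and "\<forall>a\<in>A. a > 0"
  shows "card {B. B \<subseteq> A \<and> B \<noteq> {} \<and> pairwise_coprime B} =
         card {B. B \<subseteq> A \<and> B \<noteq> {} \<and>
           2 * real (card B) - 1 =
             sqrt (1 + 4 * real_of_int (\<Sum>d = 1..Max B. moebius_mu d * int (v B d) * (int (v B d) - 1)))}"
proof -
  have "{B. B \<subseteq> A \<and> B \<noteq> {} \<and> pairwise_coprime B} =
         {B. B \<subseteq> A \<and> B \<noteq> {} \<and>
           2 * real (card B) - 1 =
             sqrt (1 + 4 * real_of_int (\<Sum>d = 1..Max B. moebius_mu d * int (v B d) * (int (v B d) - 1)))}"
  proof (intro Collect_cong conj_cong refl)
    fix B assume "B \<subseteq> A" "B \<noteq> {}"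
    then show "pairwise_coprime B = (2 * real (card B) - 1 =
             sqrt (1 + 4 * real_of_int (\<Sum>d = 1..Max B. moebius_mu d * int (v B d) * (int (v B d) - 1))))"
      using cond_iff[of B] assms finite_subset by blast
  qed
  then show ?thesis by simp
qed
end
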